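(* Let $(X,U)$ be a measurable space, $\mu:U\to B_2$ a measure, and $U'$ the set of measurable functions $X\to B_2$. Consider the map $U'\to B_2$, $f\mapsto\int f\,d\mu=\mu(\mathrm{supp}\,f)$. Then: (a) this map is linear (over $B_2$), i.e. $\int(f\oplus g)\,d\mu=\int f\,d\mu\oplus\int g\,d\mu$ and $\int (c\cdot f)\,d\mu=c\cdot\int f\,d\mu$ for $f,g\in U'$, $c\in B_2$; (b) if $f_n,f\in U'$ ($n\in\mathbb N$) and $f_n$ converges monotonously to $f$, then the binary sequence $\int f_n\,d\mu$ converges to $\int f\,d\mu$; (c) for $f,g\in U'$: $f=g$ almost everywhere if and only if $\int f\,d\mu=\int g\,d\mu$.
   Context: $B_2=\{0,1\}$, $\oplus$ addition modulo 2; functions $X\to B_2$ are added and multiplied by scalars pointwise. A measurable space $(X,U)$: $U\subset2^X$ non-empty, closed under $\Delta$ and $\cap$. $f:X\to B_2$ is measurable if $\mathrm{supp}\,f=\{x:f(x)=1\}\in U$. $\mu:U\to B_2$ is a measure if for every sequence of pairwise disjoint sets of $U$ whose union is in $U$, only finitely many have $\mu$-value 1 and $\mu$ of the union is their number modulo 2. $f_n$ converges monotonously to $f$ if either $\mathrm{supp}\,f_0\subset\mathrm{supp}\,f_1\subset\cdots$ with $\bigcup_n\mathrm{supp}\,f_n=\mathrm{supp}\,f$, or $\mathrm{supp}\,f_0\supset\mathrm{supp}\,f_1\supset\cdots$ with $\bigcap_n\mathrm{supp}\,f_n=\mathrm{supp}\,f$. A binary sequence $(x_n)$ converges to $x_0$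 if $x_n=x_0$ for all sufficiently large $n$. $f=g$ almost everywhere means $\mu(\{x:f(x)\neq g(x)\})=0$. *)

theory Defs
  imports Main "HOL-Library.Z2"
begin

text \<open>B_2 is rendered as the two-element field bit (addition = xor).
  The space X is the universe of the type 'a.\<close>

definition b2_supp :: "('a \<Rightarrow> bit) \<Rightarrow> 'a set" where
  "b2_supp f = {x. f x = 1}"

definition b2_measurable_space :: "'a set set \<Rightarrow> bool" where
  "b2_measurable_space U \<longleftrightarrow> U \<noteq> {} \<and>
     (\<forall>A\<in>U. \<forall>B\<in>U. (A - B) \<union> (B - A) \<in> U) \<and>
     (\<forall>A\<in>U. \<forall>B\<in>U. A \<inter> B \<in> U)"

definition b2_measurable :: "'a set set \<Rightarrow> ('a \<Rightarrow> bit) \<Rightarrow> bool" where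
  "b2_measurable U f \<longleftrightarrow> b2_supp f \<in> U"

definition b2_measure :: "'a set set \<Rightarrow> ('a set \<Rightarrow> bit) \<Rightarrow> bool" where
  "b2_measure U \<mu> \<longleftrightarrow>
     (\<forall>A :: nat \<Rightarrow> 'a set. (\<forall>n. A n \<in> U) \<longrightarrow> (\<forall>m n. m \<noteq> n \<longrightarrow> A m \<inter> A n = {}) \<longrightarrow> (\<Union>n. A n) \<in> U \<longrightarrow>
        finite {n. \<mu> (A n) = 1} \<and> \<mu> (\<Union>n. A n) = of_nat (card {n. \<mu> (A n) = 1}))"

definition b2_integral :: "('a set \<Rightarrow> bit) \<Rightarrow> ('a \<Rightarrow> bit) \<Rightarrow> bit" where
  "b2_integral \<mu> f = \<mu> (b2_supp f)"

definition b2_mono_conv :: "(nat \<Rightarrow> 'a \<Rightarrow> bit) \<Rightarrow> ('a \<Rightarrow> bit) \<Rightarrow> bool" where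
  "b2_mono_conv fs f \<longleftrightarrow>
     ((\<forall>n. b2_supp (fs n) \<subseteq> b2_supp (fs (Suc n))) \<and> (\<Union>n. b2_supp (fs n)) = b2_supp f) \<or>
     ((\<forall>n. b2_supp (fs (Suc n)) \<subseteq> b2_supp (fs n)) \<and> (\<Inter>n. b2_supp (fs n)) = b2_supp f)"

definition b2_seq_conv :: "(nat \<Rightarrow> bit) \<Rightarrow> bit \<Rightarrow> bool" where
  "b2_seq_conv xs x0 \<longleftrightarrow> (\<exists>N. \<forall>n\<ge>N. xs n = x0)"

definition b2_ae_eq :: "('a set \<Rightarrow> bit) \<Rightarrow> ('a \<Rightarrow> bit) \<Rightarrow> ('a \<Rightarrow> bit) \<Rightarrow> bool" where
  "b2_ae_eq \<mu> f g \<longleftrightarrow> \<mu> {x. f x \<noteq> g x} = 0"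

end

theory Submission imports Defs "HOL-Library.Infinite_Set" begin

lemma bit_cases2: "(b::bit) = 0 \<or> b = 1" by (cases "b = 0") auto

lemma card_sum_bit: "finite S \<Longrightarrow> (of_nat (card {n\<in>S. b n = 1}) :: bit) = sum b S"
proof (induction S rule: finite_induct)
  case empty then show ?case by simp
next
  case (insert x S)
  show ?case
  proof (cases "b x = 1")
    case True
    then have "{n\<in>insert x S. b n = 1} = insert x {n\<in>S. b n = 1}" by auto
    moreover have "x \<notin> {n\<in>S. b n = 1}" using insert by auto
    ultimately show ?thesis using insert True by (simp del: add_bit_eq_xor add: add.commute)
  next
    case False
    then have "b x = 0" using bit_cases2 by blast
    moreover have "{n\<in>insert x S. b n = 1} = {n\<in>S. b n = 1}" using False by auto
    ultimately show ?thesis using insert by (simp del: add_bit_eq_xor)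
  qed
qed

locale b2ctx =
  fixes U :: "'a set set" and \<mu> :: "'a set \<Rightarrow> bit"
  assumes ms: "b2_measurable_space U" and me: "b2_measure U \<mu>"
begin

lemma sdiff: "A \<in> U \<Longrightarrow> B \<in> U \<Longrightarrow> (A - B) \<union> (B - A) \<in> U"
  using ms unfolding b2_measurable_space_def by blast
lemma int: "A \<in> U \<Longrightarrow> B \<in> U \<Longrightarrow> A \<inter> B \<in> U"
  using ms unfolding b2_measurable_space_def by blast
lemma empty: "{} \<in> U"
proof -
  obtain A where "A \<in> U" using ms unfolding b2_measurable_space_def by blast
  from sdiff[OF this this] show ?thesis by simp
qed
lemma diff: "A \<in> U \<Longrightarrow> B \<in> U \<Longrightarrow> A - B \<in> U"
proof -
  assume a: "A \<in> U" "B \<in> U"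
  have "A - B = (A - A \<inter> B) \<union> (A \<inter> B - A)" by blast
  then show ?thesis using sdiff[OF a(1) int[OF a]] by simp
qed
lemma un: "A \<in> U \<Longrightarrow> B \<in> U \<Longrightarrow> A \<inter> B = {} \<Longrightarrow> A \<union> B \<in> U"
proof -
  assume a: "A \<in> U" "B \<in> U" "A \<inter> B = {}"
  have "A \<union> B = (A - B) \<union> (B - A)" using a(3) by blast
  then show ?thesis using sdiff[OF a(1,2)] by simp
qed

lemma fin: fixes A :: "nat \<Rightarrow> 'a set" shows "(\<And>n. A n \<in> U) \<Longrightarrow> (\<And>m n. m \<noteq> n \<Longrightarrow> A m \<inter> A n = {}) \<Longrightarrow> (\<Union>n. A n) \<in> U
  \<Longrightarrow> finite {n. \<mu> (A n) = 1} \<and> \<mu> (\<Union>n. A n) = of_nat (card {n. \<mu> (A n) = 1})"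
  using me unfolding b2_measure_def by blast

lemma G: fixes A :: "nat \<Rightarrow> 'a set" assumes "\<And>n. A n \<in> U" "\<And>m n. m \<noteq> n \<Longrightarrow> A m \<inter> A n = {}" "(\<Union>n. A n) \<in> U"
  "\<And>n. n \<ge> N \<Longrightarrow> \<mu> (A n) = 0"
  shows "\<mu> (\<Union>n. A n) = (\<Sum>n<N. \<mu> (A n))"
proof -
  have "{n. \<mu> (A n) = 1} = {n\<in>{..<N}. \<mu> (A n) = 1}"
  proof -
    have "\<mu> (A n) = 1 \<Longrightarrow> n < N" for n using assms(4)[of n] by (cases "n < N") auto
    then show ?thesis by auto
  qed
  then show ?thesis using fin[OF assms(1-3)] card_sum_bit[of "{..<N}" "\<lambda>n. \<mu> (A n)"] by simp
qed

lemma F: fixes A :: "nat \<Rightarrow> 'a set" assumes "\<And>n. A n \<in> U" "\<And>m n. m \<noteq> n \<Longrightarrow> A m \<inter> A n = {}" "(\<Union>n. A n) \<in> U"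
  shows "\<exists>N. \<forall>n\<ge>N. \<mu> (A n) = 0"
proof -
  have "finite {n. \<mu> (A n) = 1}" using fin[OF assms] by blast
  then obtain N where N: "{n. \<mu> (A n) = 1} \<subseteq> {..<N}" using finite_nat_iff_bounded by blast
  have "\<mu> (A n) = 0" if "n \<ge> N" for n
  proof -
    have "\<mu> (A n) \<noteq> 1"
    proof
      assume "\<mu> (A n) = 1"
      then have "n \<in> {..<N}" using N by blast
      then show False using that by simp
    qed
    then show ?thesis using bit_cases2[of "\<mu> (A n)"] by blast
  qed
  then show ?thesis by blast
qed

lemma mu_empty: "\<mu> {} = 0"
proof -
  have "finite {n::nat. \<mu> {} = 1}" using fin[of "\<lambda>n::nat. {}"] empty by auto
  then show ?thesis using bit_cases2 by (cases "\<mu> {} = 1") auto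
qed

lemma add: assumes "A \<in> U" "B \<in> U" "A \<inter> B = {}" shows "\<mu> (A \<union> B) = \<mu> A + \<mu> B"
proof -
  define S where "S = (\<lambda>n::nat. if n = 0 then A else if n = 1 then B else {})"
  have u: "(\<Union>n. S n) = A \<union> B" unfolding S_def by (auto split: if_splits)
  have "\<mu> (\<Union>n. S n) = (\<Sum>n<2. \<mu> (S n))"
    apply (rule G) using assms empty un[OF assms] u unfolding S_def by (auto simp: mu_empty)
  then show ?thesis using u unfolding S_def by (simp add: numeral_2_eq_2 del: add_bit_eq_xor)
qed


lemma inc: assumes AU: "\<And>n. A n \<in> U" and Am: "\<And>n. A n \<subseteq> A (Suc n)" and UA: "(\<Union>n. A n) \<in> U"
  shows "\<exists>N. \<forall>n\<ge>N. \<mu> (A n) = \<mu> (\<Union>n. A n)"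
proof -
  define D where "D n = (case n of 0 \<Rightarrow> A 0 | Suc m \<Rightarrow> A (Suc m) - A m)" for n
  have DU: "D n \<in> U" for n using AU diff by (cases n) (auto simp: D_def)
  have mono: "m \<le> n \<Longrightarrow> A m \<subseteq> A n" for m n using Am by (rule lift_Suc_mono_le)
  have DA: "D n \<subseteq> A n" for n by (cases n) (auto simp: D_def)
  have disj: "D m \<inter> D n = {}" if mn: "m < n" for m n
  proof -
    obtain k where k: "n = Suc k" using mn by (cases n) auto
    have "D m \<subseteq> A k" using DA[of m] mono[of m k] mn k by auto
    then show ?thesis using k by (auto simp: D_def)
  qed
  have disj2: "D m \<inter> D n = {}" if "m \<noteq> n" for m n
    using disj[of m n] disj[of n m] that by (cases "m < n") auto
  have UD: "(\<Union>k\<le>n. D k) = A n" for n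
  proof (induction n)
    case 0 then show ?case by (simp add: D_def)
  next
    case (Suc n)
    have "(\<Union>k\<le>Suc n. D k) = (\<Union>k\<le>n. D k) \<union> D (Suc n)" by (simp add: atMost_Suc Un_commute)
    also have "\<dots> = A (Suc n)" using Suc Am[of n] by (auto simp: D_def)
    finally show ?case .
  qed
  have UDA: "(\<Union>n. D n) = (\<Union>n. A n)"
  proof
    show "(\<Union>n. D n) \<subseteq> (\<Union>n. A n)" using DA by blast
    show "(\<Union>n. A n) \<subseteq> (\<Union>n. D n)" using UD by blast
  qed
  obtain N where N: "\<forall>n\<ge>N. \<mu> (D n) = 0" using F[of D] DU disj2 UDA UA by auto
  have lim: "\<mu> (\<Union>n. A n) = (\<Sum>k<N. \<mu> (D k))"
    using G[of D N] DU disj2 UDA UA N by auto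
  have fin: "\<mu> (A n) = (\<Sum>k<Suc n. \<mu> (D k))" for n
  proof -
    define E where "E k = (if k \<le> n then D k else {})" for k
    have UE: "(\<Union>k. E k) = A n" using UD[of n] by (auto simp: E_def split: if_splits)
    have "\<mu> (\<Union>k. E k) = (\<Sum>k<Suc n. \<mu> (E k))"
      apply (rule G) using DU empty disj2 UE AU by (auto simp: E_def mu_empty)
    then show ?thesis using UE by (simp add: E_def)
  qed
  have "\<forall>n\<ge>N. \<mu> (A n) = \<mu> (\<Union>n. A n)"
  proof (intro allI impI)
    fix n assume "N \<le> n"
    have "(\<Sum>k<Suc n. \<mu> (D k)) = (\<Sum>k<N. \<mu> (D k))"
      by (rule sum.mono_neutral_right) (use N \<open>N \<le> n\<close> in auto)
    then show "\<mu> (A n) = \<mu> (\<Union>n. A n)" using fin lim by simp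
  qed
  then show ?thesis by blast
qed

lemma dec: assumes AU: "\<And>n. A n \<in> U" and Am: "\<And>n. A (Suc n) \<subseteq> A n" and UA: "(\<Inter>n. A n) \<in> U"
  shows "\<exists>N. \<forall>n\<ge>N. \<mu> (A n) = \<mu> (\<Inter>n. A n)"
proof -
  define B where "B n = A 0 - A n" for n
  have BU: "B n \<in> U" for n using AU diff by (simp add: B_def)
  have UB: "(\<Union>n. B n) = A 0 - (\<Inter>n. A n)" by (auto simp: B_def)
  have UBU: "(\<Union>n. B n) \<in> U" using UB diff AU UA by simp
  have Bm: "B n \<subseteq> B (Suc n)" for n using Am[of n] by (auto simp: B_def)
  have "\<exists>N. \<forall>n\<ge>N. \<mu> (B n) = \<mu> (\<Union>n. B n)"
    by (rule inc[of B, OF BU Bm UBU])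
  then obtain N where N: "\<forall>n\<ge>N. \<mu> (B n) = \<mu> (\<Union>n. B n)" by blast
  have mono: "m \<le> n \<Longrightarrow> A n \<subseteq> A m" for m n using Am by (rule lift_Suc_antimono_le)
  have e1: "\<mu> (A 0) = \<mu> (B n) + \<mu> (A n)" for n
  proof -
    have eq: "A 0 = B n \<union> A n" using mono[of 0 n] by (auto simp: B_def)
    have dj: "B n \<inter> A n = {}" by (auto simp: B_def)
    have "\<mu> (A 0) = \<mu> (B n \<union> A n)" using eq by (rule arg_cong)
    also have "\<dots> = \<mu> (B n) + \<mu> (A n)" by (rule add[OF BU AU dj])
    finally show ?thesis .
  qed
  have e2: "\<mu> (A 0) = \<mu> (\<Union>n. B n) + \<mu> (\<Inter>n. A n)"
  proof -
    have eq: "A 0 = (\<Union>n. B n) \<union> (\<Inter>n. A n)" using UB by auto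
    have dj: "(\<Union>n. B n) \<inter> (\<Inter>n. A n) = {}" using UB by auto
    have "\<mu> (A 0) = \<mu> ((\<Union>n. B n) \<union> (\<Inter>n. A n))" using eq by (rule arg_cong)
    also have "\<dots> = \<mu> (\<Union>n. B n) + \<mu> (\<Inter>n. A n)" by (rule add[OF UBU UA dj])
    finally show ?thesis .
  qed
  have "\<forall>n\<ge>N. \<mu> (A n) = \<mu> (\<Inter>n. A n)"
  proof (intro allI impI)
    fix n assume "N \<le> n"
    then have "\<mu> (B n) = \<mu> (\<Union>n. B n)" using N by blast
    then have "\<mu> (\<Union>n. B n) + \<mu> (A n) = \<mu> (\<Union>n. B n) + \<mu> (\<Inter>n. A n)"
      using e1[of n] e2 by (simp only:)
    then show "\<mu> (A n) = \<mu> (\<Inter>n. A n)" by (rule add_left_imp_eq)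
  qed
  then show ?thesis by blast
qed

lemma symd: assumes AB: "A \<in> U" "B \<in> U" shows "\<mu> ((A - B) \<union> (B - A)) = \<mu> A + \<mu> B"
proof -
  note d1 = diff[OF AB] diff[OF AB(2,1)] int[OF AB]
  have 1: "\<mu> ((A - B) \<union> (B - A)) = \<mu> (A - B) + \<mu> (B - A)"
    by (rule add[OF d1(1,2)]) blast
  have "\<mu> A = \<mu> ((A - B) \<union> (A \<inter> B))" by (rule arg_cong[where f=\<mu>]) blast
  also have "\<dots> = \<mu> (A - B) + \<mu> (A \<inter> B)" by (rule add[OF d1(1,3)]) blast
  finally have 2: "\<mu> A = \<mu> (A - B) + \<mu> (A \<inter> B)" .
  have "\<mu> B = \<mu> ((B - A) \<union> (A \<inter> B))" by (rule arg_cong[where f=\<mu>]) blast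
  also have "\<dots> = \<mu> (B - A) + \<mu> (A \<inter> B)" by (rule add[OF d1(2,3)]) blast
  finally have 3: "\<mu> B = \<mu> (B - A) + \<mu> (A \<inter> B)" .
  have key: "(a::bit) + b = (a + x) + (b + x)" for a b x
    using bit_cases2[of a] bit_cases2[of b] bit_cases2[of x] by (auto simp del: add_bit_eq_xor)
  have "\<mu> ((A - B) \<union> (B - A)) = (\<mu> (A - B) + \<mu> (A \<inter> B)) + (\<mu> (B - A) + \<mu> (A \<inter> B))"
    unfolding 1 by (rule key)
  also have "\<dots> = \<mu> A + \<mu> B" by (simp only: 2 3)
  finally show ?thesis .
qed

end

lemma plus_eq_1: "(a::bit) + b = 1 \<longleftrightarrow> (a = 1) \<noteq> (b = 1)"
  using bit_cases2[of a] bit_cases2[of b] by (auto simp del: add_bit_eq_xor)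

lemma supp_plus: "b2_supp (\<lambda>x. f x + g x) = (b2_supp f - b2_supp g) \<union> (b2_supp g - b2_supp f)"
  unfolding b2_supp_def using plus_eq_1 by blast

lemma neq_supp: "{x. f x \<noteq> g x} = b2_supp (\<lambda>x. f x + g x)"
proof -
  have "f x \<noteq> g x \<longleftrightarrow> f x + g x = 1" for x
    using bit_cases2[of "f x"] bit_cases2[of "g x"] by (auto simp del: add_bit_eq_xor)
  then show ?thesis by (auto simp: b2_supp_def)
qed

theorem proposition7p9:
  fixes U :: "'a set set" and \<mu> :: "'a set \<Rightarrow> bit"
  assumes "b2_measurable_space U" and "b2_measure U \<mu>"
  shows "(\<forall>f g. b2_measurable U f \<longrightarrow> b2_measurable U g \<longrightarrow>
            b2_integral \<mu> (\<lambda>x. f x + g x) = b2_integral \<mu> f + b2_integral \<mu> g)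
       \<and> (\<forall>f c. b2_measurable U f \<longrightarrow>
            b2_integral \<mu> (\<lambda>x. c * f x) = c * b2_integral \<mu> f)
       \<and> (\<forall>fs f. (\<forall>n. b2_measurable U (fs n)) \<longrightarrow> b2_measurable U f \<longrightarrow> b2_mono_conv fs f \<longrightarrow>
            b2_seq_conv (\<lambda>n. b2_integral \<mu> (fs n)) (b2_integral \<mu> f))
       \<and> (\<forall>f g. b2_measurable U f \<longrightarrow> b2_measurable U g \<longrightarrow>
            (b2_ae_eq \<mu> f g \<longleftrightarrow> b2_integral \<mu> f = b2_integral \<mu> g))"
proof -
  interpret b2ctx U \<mu> using assms by unfold_locales
  have A: "b2_integral \<mu> (\<lambda>x. f x + g x) = b2_integral \<mu> f + b2_integral \<mu> g"
    if "b2_measurable U f" "b2_measurable U g" for f g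
    unfolding b2_integral_def supp_plus
    by (rule symd) (use that in \<open>simp_all add: b2_measurable_def\<close>)
  have C: "b2_integral \<mu> (\<lambda>x. c * f x) = c * b2_integral \<mu> f" for f and c :: bit
  proof (cases "c = 0")
    case True
    then have "b2_supp (\<lambda>x. c * f x) = {}" by (simp add: b2_supp_def)
    then show ?thesis using True mu_empty by (simp add: b2_integral_def)
  next
    case False
    then have "c = 1" using bit_cases2 by blast
    then show ?thesis by (simp only: mult_1_left)
  qed
  have M: "b2_seq_conv (\<lambda>n. b2_integral \<mu> (fs n)) (b2_integral \<mu> f)"
    if "\<forall>n. b2_measurable U (fs n)" "b2_measurable U f" "b2_mono_conv fs f" for fs f
  proof -
    have FU: "b2_supp (fs n) \<in> U" for n using that(1) by (simp add: b2_measurable_def)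
    have fU: "b2_supp f \<in> U" using that(2) by (simp add: b2_measurable_def)
    from that(3) show ?thesis unfolding b2_mono_conv_def
    proof
      assume h: "(\<forall>n. b2_supp (fs n) \<subseteq> b2_supp (fs (Suc n))) \<and> (\<Union>n. b2_supp (fs n)) = b2_supp f"
      have "\<exists>N. \<forall>n\<ge>N. \<mu> (b2_supp (fs n)) = \<mu> (\<Union>n. b2_supp (fs n))"
        by (rule inc[of "\<lambda>n. b2_supp (fs n)"]) (use FU h fU in auto)
      then show ?thesis using h unfolding b2_seq_conv_def b2_integral_def by simp
    next
      assume h: "(\<forall>n. b2_supp (fs (Suc n)) \<subseteq> b2_supp (fs n)) \<and> (\<Inter>n. b2_supp (fs n)) = b2_supp f"
      have "\<exists>N. \<forall>n\<ge>N. \<mu> (b2_supp (fs n)) = \<mu> (\<Inter>n. b2_supp (fs n))"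
        by (rule dec[of "\<lambda>n. b2_supp (fs n)"]) (use FU h fU in auto)
      then show ?thesis using h unfolding b2_seq_conv_def b2_integral_def by simp
    qed
  qed
  have E: "b2_ae_eq \<mu> f g \<longleftrightarrow> b2_integral \<mu> f = b2_integral \<mu> g"
    if "b2_measurable U f" "b2_measurable U g" for f g
  proof -
    have "b2_ae_eq \<mu> f g \<longleftrightarrow> b2_integral \<mu> f + b2_integral \<mu> g = 0"
      using A[OF that] unfolding b2_ae_eq_def neq_supp b2_integral_def by (simp only:)
    also have "\<dots> \<longleftrightarrow> b2_integral \<mu> f = b2_integral \<mu> g"
      using bit_cases2[of "b2_integral \<mu> f"] bit_cases2[of "b2_integral \<mu> g"] by (auto simp del: add_bit_eq_xor)
    finally show ?thesis .
  qed
  show ?thesis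
    apply (intro conjI allI impI)
    subgoal by (rule A) assumption+
    subgoal by (rule C)
    subgoal by (rule M) assumption+
    subgoal by (rule E) assumption+
    done
qed

end
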